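(* Let $\pi:\widetilde{\mathrm{S}}\to\mathrm{S}$ be a discrete covering of connected Lie groups and let $(\mathrm{G},\mathrm{G}')$ be a dual pair in $\mathrm{S}$. If $\mathrm{G}$ and $\mathrm{G}'$ are connected, then $(\pi^{-1}(\mathrm{G}),\pi^{-1}(\mathrm{G}'))$ is a dual pair in $\widetilde{\mathrm{S}}$.
   Context: A pair of subgroups $(\mathrm{G},\mathrm{G}')$ of a group $\mathrm{S}$ is a dual pair if $Z_{\mathrm{S}}(\mathrm{G}')=\mathrm{G}$ and $Z_{\mathrm{S}}(\mathrm{G})=\mathrm{G}'$, where $Z_{\mathrm{S}}$ denotes the centralizer in $\mathrm{S}$. A discrete covering is a surjective Lie group homomorphism which is a covering map with discrete (central) kernel. *)

theory Defs
  imports "HOL-Analysis.Analysis" "HOL-Algebra.Group"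
begin

definition topological_group :: "'a monoid \<Rightarrow> 'a topology \<Rightarrow> bool" where
  "topological_group S T \<longleftrightarrow>
     group S \<and> topspace T = carrier S \<and>
     continuous_map (prod_topology T T) T (\<lambda>p. fst p \<otimes>\<^bsub>S\<^esub> snd p) \<and>
     continuous_map T T (\<lambda>x. inv\<^bsub>S\<^esub> x)"

text \<open>A Lie group, rendered as a Hausdorff topological group that is locally Euclidean
  (by Gleason--Montgomery--Zippin these carry a unique compatible real-analytic Lie group
  structure, and continuous homomorphisms between them are automatically smooth).\<close>
definition lie_group :: "'a monoid \<Rightarrow> 'a topology \<Rightarrow> bool" where
  "lie_group S T \<longleftrightarrow>
     topological_group S T \<and> Hausdorff_space T \<and>
     (\<exists>n. \<forall>x\<in>topspace T. \<exists>U W. openin T U \<and> x \<in> U \<and> openin (Euclidean_space n) W \<and>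
          subtopology T U homeomorphic_space subtopology (Euclidean_space n) W)"

definition covering_map :: "'a topology \<Rightarrow> 'b topology \<Rightarrow> ('a \<Rightarrow> 'b) \<Rightarrow> bool" where
  "covering_map X Y p \<longleftrightarrow>
     continuous_map X Y p \<and> p ` topspace X = topspace Y \<and>
     (\<forall>y\<in>topspace Y. \<exists>V. openin Y V \<and> y \<in> V \<and>
        (\<exists>\<U>. \<Union>\<U> = topspace X \<inter> p -` V \<and> (\<forall>U\<in>\<U>. openin X U) \<and> pairwise disjnt \<U> \<and>
             (\<forall>U\<in>\<U>. homeomorphic_map (subtopology X U) (subtopology Y V) p)))"

definition group_kernel :: "'a monoid \<Rightarrow> 'b monoid \<Rightarrow> ('a \<Rightarrow> 'b) \<Rightarrow> 'a set" where
  "group_kernel G H f = {x \<in> carrier G. f x = \<one>\<^bsub>H\<^esub>}"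

definition discrete_covering ::
  "'a monoid \<Rightarrow> 'a topology \<Rightarrow> 'b monoid \<Rightarrow> 'b topology \<Rightarrow> ('a \<Rightarrow> 'b) \<Rightarrow> bool" where
  "discrete_covering St Tt S T p \<longleftrightarrow>
     lie_group St Tt \<and> lie_group S T \<and>
     p \<in> hom St S \<and> p ` carrier St = carrier S \<and>
     covering_map Tt T p \<and>
     subtopology Tt (group_kernel St S p) = discrete_topology (group_kernel St S p) \<and>
     (\<forall>k\<in>group_kernel St S p. \<forall>x\<in>carrier St. k \<otimes>\<^bsub>St\<^esub> x = x \<otimes>\<^bsub>St\<^esub> k)"

definition centralizer_in :: "'a monoid \<Rightarrow> 'a set \<Rightarrow> 'a set" where
  "centralizer_in S A = {g \<in> carrier S. \<forall>a\<in>A. g \<otimes>\<^bsub>S\<^esub> a = a \<otimes>\<^bsub>S\<^esub> g}"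

definition dual_pair :: "'a monoid \<Rightarrow> 'a set \<Rightarrow> 'a set \<Rightarrow> bool" where
  "dual_pair S G G' \<longleftrightarrow> subgroup G S \<and> subgroup G' S \<and>
     centralizer_in S G' = G \<and> centralizer_in S G = G'"

end

theory Submission
  imports Defs
begin

lemma tg_mult_cont:
  assumes "topological_group S T" "continuous_map X T g" "continuous_map X T h"
  shows "continuous_map X T (\<lambda>z. g z \<otimes>\<^bsub>S\<^esub> h z)"
proof -
  have "continuous_map X (prod_topology T T) (\<lambda>z. (g z, h z))"
    using assms by (intro continuous_map_pairedI)
  moreover have "continuous_map (prod_topology T T) T (\<lambda>p. fst p \<otimes>\<^bsub>S\<^esub> snd p)"
    using assms(1) unfolding topological_group_def by blast
  ultimately have "continuous_map X T ((\<lambda>p. fst p \<otimes>\<^bsub>S\<^esub> snd p) \<circ> (\<lambda>z. (g z, h z)))"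
    by (rule continuous_map_compose)
  then show ?thesis by (simp add: o_def)
qed

lemma tg_inv_cont:
  assumes "topological_group S T" "continuous_map X T g"
  shows "continuous_map X T (\<lambda>z. inv\<^bsub>S\<^esub> g z)"
proof -
  have "continuous_map T T (\<lambda>x. inv\<^bsub>S\<^esub> x)"
    using assms(1) unfolding topological_group_def by blast
  then show ?thesis using continuous_map_compose[OF assms(2)] by (auto simp: o_def)
qed

lemma covering_open:
  assumes "covering_map X Y p" "openin X N"
  shows "openin Y (p ` N)"
proof (subst openin_subopen, intro ballI)
  fix y assume "y \<in> p ` N"
  then obtain x where x: "x \<in> N" "y = p x" by auto
  have xt: "x \<in> topspace X" using x assms(2) openin_subset by blast
  have cm: "continuous_map X Y p" using assms(1) unfolding covering_map_def by blast
  have "p x \<in> topspace Y" using cm xt continuous_map_image_subset_topspace by blast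
  then obtain V \<U> where V: "openin Y V" "p x \<in> V" "\<Union>\<U> = topspace X \<inter> p -` V"
    "\<forall>U\<in>\<U>. openin X U" "\<forall>U\<in>\<U>. homeomorphic_map (subtopology X U) (subtopology Y V) p"
    using assms(1) unfolding covering_map_def by meson
  from V(3) xt V(2) obtain U where U: "U \<in> \<U>" "x \<in> U" by blast
  have om: "open_map (subtopology X U) (subtopology Y V) p"
    using V(5) U(1) homeomorphic_imp_open_map by blast
  have "openin (subtopology X U) (N \<inter> U)"
    using assms(2) by (simp add: openin_subtopology_Int)
  then have "openin (subtopology Y V) (p ` (N \<inter> U))"
    using om open_map_def by blast
  then have o: "openin Y (p ` (N \<inter> U))" using V(1) openin_trans_full by blast
  show "\<exists>T. openin Y T \<and> y \<in> T \<and> T \<subseteq> p ` N"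
    by (rule exI[of _ "p ` (N \<inter> U)"]) (use o x U in auto)
qed

lemma (in group) comm_iff:
  assumes "x \<in> carrier G" "z \<in> carrier G"
  shows "(x \<otimes> z \<otimes> inv x \<otimes> inv z = \<one>) = (x \<otimes> z = z \<otimes> x)"
proof -
  have "x \<otimes> z \<otimes> inv x \<otimes> inv z = (x \<otimes> z) \<otimes> inv (z \<otimes> x)"
    using assms by (simp add: m_assoc inv_mult_group)
  moreover have "((x \<otimes> z) \<otimes> inv (z \<otimes> x) = \<one>) = (x \<otimes> z = z \<otimes> x)"
    using assms by (metis inv_closed inv_equality inv_inv m_closed r_inv)
  ultimately show ?thesis by simp
qed

lemma (in group) comm_shift:
  assumes "x \<in> carrier G" "z1 \<in> carrier G" "k \<in> carrier G"
    "x \<otimes> z1 = z1 \<otimes> x" "k \<otimes> x = x \<otimes> k"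
  shows "x \<otimes> (z1 \<otimes> k) = (z1 \<otimes> k) \<otimes> x"
  using assms by (metis m_assoc)

lemma (in group) fiber_decomp:
  assumes "z1 \<in> carrier G" "z2 \<in> carrier G"
  shows "z2 = z1 \<otimes> (inv z1 \<otimes> z2)"
  using assms by (simp add: m_assoc[symmetric])

lemma commute_lift:
  assumes dc: "discrete_covering St Tt S T \<pi>"
    and conB: "connectedin T B" and sB: "subgroup B S"
    and x: "x \<in> carrier St" and xc: "\<forall>b\<in>B. \<pi> x \<otimes>\<^bsub>S\<^esub> b = b \<otimes>\<^bsub>S\<^esub> \<pi> x"
    and y: "y \<in> carrier St" "\<pi> y \<in> B"
  shows "x \<otimes>\<^bsub>St\<^esub> y = y \<otimes>\<^bsub>St\<^esub> x"
proof -
  define K where "K = group_kernel St S \<pi>"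
  have tgSt: "topological_group St Tt" and tgS: "topological_group S T"
    using dc unfolding discrete_covering_def lie_group_def by auto
  have gSt: "group St" and gS: "group S" and topSt: "topspace Tt = carrier St"
    using tgSt tgS unfolding topological_group_def by auto
  have hom: "\<pi> \<in> hom St S" and surj: "\<pi> ` carrier St = carrier S"
    and cov: "covering_map Tt T \<pi>"
    and disc: "subtopology Tt K = discrete_topology K"
    and central: "\<forall>k\<in>K. \<forall>x\<in>carrier St. k \<otimes>\<^bsub>St\<^esub> x = x \<otimes>\<^bsub>St\<^esub> k"
    using dc unfolding discrete_covering_def K_def by auto
  interpret gh: group_hom St S \<pi>
    using gSt gS hom by (simp add: group_hom_def group_hom_axioms_def)
  have Bsub: "B \<subseteq> carrier S" using sB subgroup.subset by blast
  have oneB: "\<one>\<^bsub>S\<^esub> \<in> B" using sB subgroup.one_closed by blast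
  define f where "f z = x \<otimes>\<^bsub>St\<^esub> z \<otimes>\<^bsub>St\<^esub> inv\<^bsub>St\<^esub> x \<otimes>\<^bsub>St\<^esub> inv\<^bsub>St\<^esub> z" for z
  define Hp where "Hp = carrier St \<inter> \<pi> -` B"
  have fiff: "f z = \<one>\<^bsub>St\<^esub> \<longleftrightarrow> x \<otimes>\<^bsub>St\<^esub> z = z \<otimes>\<^bsub>St\<^esub> x" if "z \<in> carrier St" for z
    unfolding f_def using group.comm_iff[OF gSt x that] .
  have cf: "continuous_map Tt Tt f"
  proof -
    have c1: "continuous_map Tt Tt (\<lambda>z. x)" using x topSt by simp
    have c2: "continuous_map Tt Tt (\<lambda>z. z)" using continuous_map_id by (simp add: id_def)
    have c3: "continuous_map Tt Tt (\<lambda>z. x \<otimes>\<^bsub>St\<^esub> z)" by (rule tg_mult_cont[OF tgSt c1 c2])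
    have c4: "continuous_map Tt Tt (\<lambda>z. x \<otimes>\<^bsub>St\<^esub> z \<otimes>\<^bsub>St\<^esub> inv\<^bsub>St\<^esub> x)"
      by (rule tg_mult_cont[OF tgSt c3 tg_inv_cont[OF tgSt c1]])
    show ?thesis unfolding f_def
      by (rule tg_mult_cont[OF tgSt c4 tg_inv_cont[OF tgSt c2]])
  qed
  have fK: "f z \<in> K" if "z \<in> Hp" for z
  proof -
    have z: "z \<in> carrier St" "\<pi> z \<in> B" using that Hp_def by auto
    have "\<pi> (f z) = \<pi> x \<otimes>\<^bsub>S\<^esub> \<pi> z \<otimes>\<^bsub>S\<^esub> inv\<^bsub>S\<^esub> \<pi> x \<otimes>\<^bsub>S\<^esub> inv\<^bsub>S\<^esub> \<pi> z"
      unfolding f_def using x z by simp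
    also have "\<dots> = \<one>\<^bsub>S\<^esub>"
      using group.comm_iff[OF gS, of "\<pi> x" "\<pi> z"] xc z x by auto
    finally show ?thesis unfolding K_def group_kernel_def f_def using x z by auto
  qed
  have cK: "continuous_map (subtopology Tt Hp) (discrete_topology K) f"
  proof -
    have "continuous_map (subtopology Tt Hp) Tt f" using cf continuous_map_from_subtopology by blast
    moreover have "f \<in> topspace (subtopology Tt Hp) \<rightarrow> K" using fK by auto
    ultimately have "continuous_map (subtopology Tt Hp) (subtopology Tt K) f"
      by (rule continuous_map_into_subtopology)
    then show ?thesis using disc by simp
  qed
  have tsH: "topspace (subtopology Tt Hp) = Hp" using topSt Hp_def by auto
  have one1: "\<one>\<^bsub>St\<^esub> \<in> K" unfolding K_def group_kernel_def using gSt by (simp add: group.is_monoid monoid.one_closed)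
  have "openin (subtopology Tt Hp) {z \<in> topspace (subtopology Tt Hp). f z \<in> {\<one>\<^bsub>St\<^esub>}}"
    by (rule openin_continuous_map_preimage[OF cK]) (use one1 in simp)
  then obtain N1 where N1: "openin Tt N1" "{z \<in> Hp. f z = \<one>\<^bsub>St\<^esub>} = N1 \<inter> Hp"
    unfolding openin_subtopology tsH by auto
  have "openin (subtopology Tt Hp) {z \<in> topspace (subtopology Tt Hp). f z \<in> K - {\<one>\<^bsub>St\<^esub>}}"
    by (rule openin_continuous_map_preimage[OF cK]) simp
  then obtain N2 where N2: "openin Tt N2" "{z \<in> Hp. f z \<in> K - {\<one>\<^bsub>St\<^esub>}} = N2 \<inter> Hp"
    unfolding openin_subtopology tsH by auto
  have N1c: "N1 \<subseteq> carrier St" using N1(1) openin_subset topSt by blast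
  have N2c: "N2 \<subseteq> carrier St" using N2(1) openin_subset topSt by blast
  have o1: "openin T (\<pi> ` N1)" using covering_open[OF cov N1(1)] .
  have o2: "openin T (\<pi> ` N2)" using covering_open[OF cov N2(1)] .
  have cover: "B \<subseteq> \<pi> ` N1 \<union> \<pi> ` N2"
  proof
    fix b assume b: "b \<in> B"
    then obtain z where z: "z \<in> carrier St" "b = \<pi> z" using surj Bsub by blast
    then have zH: "z \<in> Hp" using b Hp_def by auto
    show "b \<in> \<pi> ` N1 \<union> \<pi> ` N2"
    proof (cases "f z = \<one>\<^bsub>St\<^esub>")
      case True then have "z \<in> N1" using N1(2) zH by blast
      then show ?thesis using z by blast
    next
      case False then have "z \<in> N2" using N2(2) zH fK[OF zH] by blast
      then show ?thesis using z by blast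
    qed
  qed
  have disj: "\<pi> ` N1 \<inter> \<pi> ` N2 \<inter> B = {}"
  proof (rule ccontr)
    assume "\<pi> ` N1 \<inter> \<pi> ` N2 \<inter> B \<noteq> {}"
    then obtain z1 z2 where z: "z1 \<in> N1" "z2 \<in> N2" "\<pi> z1 = \<pi> z2" "\<pi> z1 \<in> B" by auto
    have zc: "z1 \<in> carrier St" "z2 \<in> carrier St" using z N1c N2c by auto
    have zH: "z1 \<in> Hp" "z2 \<in> Hp" using z zc Hp_def by auto
    have f1: "f z1 = \<one>\<^bsub>St\<^esub>" using N1(2) z(1) zH by blast
    have f2: "f z2 \<noteq> \<one>\<^bsub>St\<^esub>" using N2(2) z(2) zH by blast
    define k where "k = inv\<^bsub>St\<^esub> z1 \<otimes>\<^bsub>St\<^esub> z2"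
    have kc: "k \<in> carrier St" using zc gSt k_def by (simp add: group.inv_closed group.is_monoid monoid.m_closed)
    have "\<pi> k = inv\<^bsub>S\<^esub> \<pi> z1 \<otimes>\<^bsub>S\<^esub> \<pi> z2" using zc k_def by simp
    also have "\<dots> = \<one>\<^bsub>S\<^esub>" using z(3) zc gS by (simp add: group.l_inv)
    finally have "k \<in> K" using kc unfolding K_def group_kernel_def by simp
    then have kx: "k \<otimes>\<^bsub>St\<^esub> x = x \<otimes>\<^bsub>St\<^esub> k" using central x by blast
    have z2eq: "z2 = z1 \<otimes>\<^bsub>St\<^esub> k" unfolding k_def using group.fiber_decomp[OF gSt zc] .
    have "x \<otimes>\<^bsub>St\<^esub> z1 = z1 \<otimes>\<^bsub>St\<^esub> x" using fiff zc f1 by blast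
    then have "x \<otimes>\<^bsub>St\<^esub> z2 = z2 \<otimes>\<^bsub>St\<^esub> x"
      using group.comm_shift[OF gSt x zc(1) kc _ kx] z2eq by simp
    then show False using fiff zc f2 by blast
  qed
  have ne: "\<pi> ` N1 \<inter> B \<noteq> {}"
  proof -
    have "\<one>\<^bsub>St\<^esub> \<in> Hp" using Hp_def oneB gSt by (simp add: group.is_monoid monoid.one_closed)
    moreover have "f \<one>\<^bsub>St\<^esub> = \<one>\<^bsub>St\<^esub>" using fiff gSt x by (simp add: group.is_monoid monoid.one_closed)
    ultimately have "\<one>\<^bsub>St\<^esub> \<in> N1" using N1(2) by blast
    then show ?thesis using oneB by force
  qed
  have empty2: "\<pi> ` N2 \<inter> B = {}"
    using conB o1 o2 cover disj ne unfolding connectedin by blast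
  have yH: "y \<in> Hp" using y Hp_def by auto
  show ?thesis
  proof (rule ccontr)
    assume "\<not> ?thesis"
    then have "f y \<noteq> \<one>\<^bsub>St\<^esub>" using fiff y by blast
    then have "y \<in> N2" using N2(2) yH fK[OF yH] by blast
    then show False using empty2 y by blast
  qed
qed

lemma preimage_subgroup:
  assumes dc: "discrete_covering St Tt S T \<pi>" and sB: "subgroup B S"
  shows "subgroup (carrier St \<inter> \<pi> -` B) St"
proof -
  have gSt: "group St" and gS: "group S" and hom: "\<pi> \<in> hom St S"
    using dc unfolding discrete_covering_def lie_group_def topological_group_def by auto
  interpret gh: group_hom St S \<pi>
    using gSt gS hom by (simp add: group_hom_def group_hom_axioms_def)
  show ?thesis
  proof (rule group.subgroupI[OF gSt])
    show "carrier St \<inter> \<pi> -` B \<subseteq> carrier St" by blast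
    have "\<one>\<^bsub>St\<^esub> \<in> carrier St \<inter> \<pi> -` B" using sB subgroup.one_closed by fastforce
    then show "carrier St \<inter> \<pi> -` B \<noteq> {}" by blast
    show "inv\<^bsub>St\<^esub> a \<in> carrier St \<inter> \<pi> -` B" if "a \<in> carrier St \<inter> \<pi> -` B" for a
      using that sB by (simp add: subgroup.m_inv_closed)
    show "a \<otimes>\<^bsub>St\<^esub> b \<in> carrier St \<inter> \<pi> -` B" if "a \<in> carrier St \<inter> \<pi> -` B" "b \<in> carrier St \<inter> \<pi> -` B" for a b
      using that sB by (simp add: subgroup.m_closed)
  qed
qed

lemma cent_sub:
  assumes dc: "discrete_covering St Tt S T \<pi>" and cB: "centralizer_in S B' = B"
    and sB': "B' \<subseteq> carrier S"
  shows "centralizer_in St (carrier St \<inter> \<pi> -` B') \<subseteq> carrier St \<inter> \<pi> -` B"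
proof
  have gSt: "group St" and gS: "group S" and hom: "\<pi> \<in> hom St S"
    and surj: "\<pi> ` carrier St = carrier S"
    using dc unfolding discrete_covering_def lie_group_def topological_group_def by auto
  interpret gh: group_hom St S \<pi>
    using gSt gS hom by (simp add: group_hom_def group_hom_axioms_def)
  fix g assume g: "g \<in> centralizer_in St (carrier St \<inter> \<pi> -` B')"
  then have gc: "g \<in> carrier St" unfolding centralizer_in_def by auto
  have "\<pi> g \<in> centralizer_in S B'"
    unfolding centralizer_in_def
  proof (intro CollectI conjI ballI)
    show "\<pi> g \<in> carrier S" using gc by simp
    fix a assume a: "a \<in> B'"
    then obtain y where y: "y \<in> carrier St" "a = \<pi> y" using surj sB' by (metis image_iff subsetD)
    then have "g \<otimes>\<^bsub>St\<^esub> y = y \<otimes>\<^bsub>St\<^esub> g" using g a unfolding centralizer_in_def by auto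
    then show "\<pi> g \<otimes>\<^bsub>S\<^esub> a = a \<otimes>\<^bsub>S\<^esub> \<pi> g" using y gc by (metis gh.hom_mult)
  qed
  then show "g \<in> carrier St \<inter> \<pi> -` B" using gc cB by auto
qed

theorem lemma3p2:
  fixes St :: "'a monoid" and Tt :: "'a topology"
    and S :: "'b monoid" and T :: "'b topology"
    and \<pi> :: "'a \<Rightarrow> 'b" and G G' :: "'b set"
  assumes "discrete_covering St Tt S T \<pi>"
    and "connected_space Tt" and "connected_space T"
    and "dual_pair S G G'"
    and "connectedin T G" and "connectedin T G'"
  shows "dual_pair St (carrier St \<inter> \<pi> -` G) (carrier St \<inter> \<pi> -` G')"
proof -
  note dc = assms(1)
  have sG: "subgroup G S" and sG': "subgroup G' S" and cG: "centralizer_in S G' = G"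
    and cG': "centralizer_in S G = G'"
    using assms(4) unfolding dual_pair_def by auto
  have Gc: "G \<subseteq> carrier S" and G'c: "G' \<subseteq> carrier S" using sG sG' subgroup.subset by auto
  have comm: "x \<otimes>\<^bsub>St\<^esub> y = y \<otimes>\<^bsub>St\<^esub> x"
    if x: "x \<in> carrier St" "\<pi> x \<in> G" and y: "y \<in> carrier St" "\<pi> y \<in> G'" for x y
  proof (rule commute_lift[OF dc assms(6) sG' x(1) _ y])
    show "\<forall>b\<in>G'. \<pi> x \<otimes>\<^bsub>S\<^esub> b = b \<otimes>\<^bsub>S\<^esub> \<pi> x"
      using x(2) cG unfolding centralizer_in_def by auto
  qed
  have c1: "centralizer_in St (carrier St \<inter> \<pi> -` G') = carrier St \<inter> \<pi> -` G"
  proof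
    show "centralizer_in St (carrier St \<inter> \<pi> -` G') \<subseteq> carrier St \<inter> \<pi> -` G"
      by (rule cent_sub[OF dc cG G'c])
    show "carrier St \<inter> \<pi> -` G \<subseteq> centralizer_in St (carrier St \<inter> \<pi> -` G')"
      unfolding centralizer_in_def using comm by auto
  qed
  have c2: "centralizer_in St (carrier St \<inter> \<pi> -` G) = carrier St \<inter> \<pi> -` G'"
  proof
    show "centralizer_in St (carrier St \<inter> \<pi> -` G) \<subseteq> carrier St \<inter> \<pi> -` G'"
      by (rule cent_sub[OF dc cG' Gc])
    show "carrier St \<inter> \<pi> -` G' \<subseteq> centralizer_in St (carrier St \<inter> \<pi> -` G)"
      unfolding centralizer_in_def using comm by force
  qed
  show ?thesis unfolding dual_pair_def
    using preimage_subgroup[OF dc sG] preimage_subgroup[OF dc sG'] c1 c2 by blast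
qed

end
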